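(* Consider a human–algorithm system (as defined in the context). If either $a_i\le h_i$ for all $i\in\{1,\dots,N\}$, or $a_i\ge h_i$ for all $i\in\{1,\dots,N\}$, then the system does not exhibit complementarity.
   Context: A human–algorithm system consists of: an integer $N\ge1$ (number of regimes); probabilities $p_1,\dots,p_N\ge 0$ with $\sum_i p_i=1$; algorithmic losses $a_1,\dots,a_N\ge 0$ and unaided-human losses $h_1,\dots,h_N\ge0$; and a combining function $c:[0,\infty)^2\to\mathbb{R}$ satisfying $\min(a,h)\le c(a,h)\le\max(a,h)$ for all $a,h\ge0$, where $c(a_i,h_i)$ is the loss of the combined system in regime $i$. Write $A=\sum_i p_i a_i$ and $H=\sum_i p_i h_i$. The system exhibits complementarity if $\sum_{i=1}^N p_i\,c(a_i,h_i)<\min(A,H)$. *)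

theory Defs
  imports Main "HOL.Real"
begin

definition human_algorithm_system ::
  "nat \<Rightarrow> (nat \<Rightarrow> real) \<Rightarrow> (nat \<Rightarrow> real) \<Rightarrow> (nat \<Rightarrow> real) \<Rightarrow> (real \<Rightarrow> real \<Rightarrow> real) \<Rightarrow> bool"
where
  "human_algorithm_system N p a h c \<longleftrightarrow>
     N \<ge> 1 \<and>
     (\<forall>i\<in>{1..N}. p i \<ge> 0) \<and> (\<Sum>i=1..N. p i) = 1 \<and>
     (\<forall>i\<in>{1..N}. a i \<ge> 0) \<and> (\<forall>i\<in>{1..N}. h i \<ge> 0) \<and>
     (\<forall>x y. x \<ge> 0 \<longrightarrow> y \<ge> 0 \<longrightarrow> min x y \<le> c x y \<and> c x y \<le> max x y)"

definition exhibits_complementarity ::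
  "nat \<Rightarrow> (nat \<Rightarrow> real) \<Rightarrow> (nat \<Rightarrow> real) \<Rightarrow> (nat \<Rightarrow> real) \<Rightarrow> (real \<Rightarrow> real \<Rightarrow> real) \<Rightarrow> bool"
where
  "exhibits_complementarity N p a h c \<longleftrightarrow>
     (\<Sum>i=1..N. p i * c (a i) (h i)) <
       min (\<Sum>i=1..N. p i * a i) (\<Sum>i=1..N. p i * h i)"

end

theory Submission
  imports Defs
begin

theorem lemma3:
  fixes N :: nat and p a h :: "nat \<Rightarrow> real" and c :: "real \<Rightarrow> real \<Rightarrow> real"
  assumes "human_algorithm_system N p a h c"
    and "(\<forall>i\<in>{1..N}. a i \<le> h i) \<or> (\<forall>i\<in>{1..N}. a i \<ge> h i)"
  shows "\<not> exhibits_complementarity N p a h c"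
proof -
  from assms(1) have p: "\<forall>i\<in>{1..N}. p i \<ge> 0" and a: "\<forall>i\<in>{1..N}. a i \<ge> 0"
    and h: "\<forall>i\<in>{1..N}. h i \<ge> 0"
    and c: "\<forall>x y. x \<ge> 0 \<longrightarrow> y \<ge> 0 \<longrightarrow> min x y \<le> c x y \<and> c x y \<le> max x y"
    unfolding human_algorithm_system_def by auto
  show ?thesis using assms(2)
  proof
    assume le: "\<forall>i\<in>{1..N}. a i \<le> h i"
    have "(\<Sum>i=1..N. p i * a i) \<le> (\<Sum>i=1..N. p i * c (a i) (h i))"
    proof (rule sum_mono)
      fix i assume i: "i \<in> {1..N}"
      have "a i \<le> c (a i) (h i)" using c a h le i by (metis min.absorb1)
      then show "p i * a i \<le> p i * c (a i) (h i)" using p i by (simp add: mult_left_mono)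
    qed
    then show ?thesis unfolding exhibits_complementarity_def by linarith
  next
    assume ge: "\<forall>i\<in>{1..N}. a i \<ge> h i"
    have "(\<Sum>i=1..N. p i * h i) \<le> (\<Sum>i=1..N. p i * c (a i) (h i))"
    proof (rule sum_mono)
      fix i assume i: "i \<in> {1..N}"
      have "h i \<le> c (a i) (h i)" using c a h ge i by (metis min.absorb2)
      then show "p i * h i \<le> p i * c (a i) (h i)" using p i by (simp add: mult_left_mono)
    qed
    then show ?thesis unfolding exhibits_complementarity_def by linarith
  qed
qed

end
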